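(* Consider Algorithm iR2N (described in the context) and suppose (A5) and (A6) hold. Let $\epsilon>0$ and let $k$ be an iteration with $\nu_k^{-1}\|\hat s_{k,\mathrm{cp}}\|<\epsilon$. Then there exists $s_{k,\mathrm{cp}}\in\operatorname{argmin}_s m_{\mathrm{cp}}(s;x_k,\nu_k^{-1})$ satisfying the inequality in (A5) (i.e., $\|\hat s_{k,\mathrm{cp}}\|\ge\kappa_s\|s_{k,\mathrm{cp}}\|$) such that $\|s_{k,\mathrm{cp}}\|<\kappa_s^{-1}\nu_{\max}\epsilon$, and there exists $u_k\in\nabla f(x_k)+\partial\psi(s_{k,\mathrm{cp}};x_k)$ with $$\|u_k\|<\big(\kappa_\nabla\theta_2\nu_{\max}+\kappa_s^{-1}\big)\epsilon,$$ where $\nu_{\max}=\theta_1/\sigma_{\min}$.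
   Context: Setting. $f:\mathbb{R}^n\to\mathbb{R}$ is continuously differentiable, $h:\mathbb{R}^n\to\mathbb{R}\cup\{+\infty\}$ is proper and lower semicontinuous; the problem is $\min_x f(x)+h(x)$. $\|\cdot\|$ is the Euclidean norm (spectral norm for matrices). For each $x$, approximations $\hat f(x)\in\mathbb{R}$ of $f(x)$ and $\hat\nabla f(x)\in\mathbb{R}^n$ of $\nabla f(x)$ are available. For each $x$, $\psi(\cdot;x):\mathbb{R}^n\to\mathbb{R}\cup\{+\infty\}$ is proper, lsc, satisfies $\psi(0;x)=h(x)$ and $\partial\psi(0;x)\subseteq\partial h(x)$ ($\partial$ = limiting subdifferential), and is uniformly prox-bounded: there is $\lambda>0$ such that for every $x$ and every $0<\lambda'<\lambda$, $w\mapsto\psi(w;x)+\tfrac{1}{2\lambda'}\|w\|^2$ is bounded below. Models: $\varphi_{\mathrm{cp}}(s;x)=\hat f(x)+\hat\nabla f(x)^Ts$; $m_{\mathrm{cp}}(s;x,\nu^{-1})=\varphi_{\mathrm{cp}}(s;x)+\tfrac12\nu^{-1}\|s\|^2+\psi(s;x)$; for a symmetric $B(x)\in\mathbb{R}^{n\times n}$, $\varphi(s;x)=\hat f(x)+\hat\nabla f(x)^Ts+\tfrac12 s^TB(x)s$ and $m(s;x,\sigma)=\varphi(s;x)+\tfrac12\sigma\|s\|^2+\psi(s;x)$. Algorithm iR2N. Constants: $\kappa_f,\kappa_\nabla>0$, $0<\gamma_3\le 1<\gamma_1\le\gamma_2$, $0<\hat\eta_1\le\hat\eta_2<1$, $0<\theta_1<1<\theta_2$,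 $\sigma_{\min}>4\kappa_f\theta_1\theta_2^2/(\hat\eta_1(1-\theta_1))$, $\sigma_0\ge\sigma_{\min}$, $x_0\in\mathbb{R}^n$. At iteration $k=0,1,\dots$: choose symmetric $B_k=B(x_k)$; set $\nu_k=\theta_1/(\|B_k\|+\sigma_k)$; compute $\hat s_{k,\mathrm{cp}}$ with $m_{\mathrm{cp}}(\hat s_{k,\mathrm{cp}};x_k,\nu_k^{-1})\le m_{\mathrm{cp}}(0;x_k,\nu_k^{-1})$ (an approximate minimizer of $m_{\mathrm{cp}}(\cdot;x_k,\nu_k^{-1})$ obtained by a descent procedure from $s=0$); compute $s_k$ with $m(s_k;x_k,\sigma_k)\le m(\hat s_{k,\mathrm{cp}};x_k,\sigma_k)$; if $\|s_k\|>\theta_2\|\hat s_{k,\mathrm{cp}}\|$, reset $s_k=\hat s_{k,\mathrm{cp}}$ (these computations are repeated with refined $\hat f,\hat\nabla f$ until (A6) holds). Compute $$\hat\rho_k=\frac{\hat f(x_k)+h(x_k)-\hat f(x_k+s_k)-h(x_k+s_k)}{\varphi(0;x_k)+\psi(0;x_k)-\varphi(s_k;x_k)-\psi(s_k;x_k)},$$ where $\varphi(\cdot;x_k)$ uses $B_k$. If $\hat\rho_k\ge\hat\eta_1$ set $x_{k+1}=x_k+s_k$, else $x_{k+1}=x_k$. Choose $\sigma_{k+1}\in[\gamma_3\sigma_k,\sigma_k]$ if $\hat\rho_k\ge\hat\eta_2$, $\sigma_{k+1}\in[\sigma_k,\gamma_1\sigma_k]$ if $\hat\eta_1\le\hat\rho_k<\hat\eta_2$,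 $\sigma_{k+1}\in[\gamma_1\sigma_k,\gamma_2\sigma_k]$ if $\hat\rho_k<\hat\eta_1$; then reset $\sigma_{k+1}=\max(\sigma_{k+1},\sigma_{\min})$. Assumptions. (A5) There is $\kappa_s\in(0,1]$ such that for all $k$ the set $\operatorname{argmin}_s m_{\mathrm{cp}}(s;x_k,\nu_k^{-1})$ (the set of exact Cauchy steps, equal to $\mathrm{prox}_{\nu_k\psi(\cdot;x_k)}(-\nu_k\hat\nabla f(x_k))$) is nonempty and $\|\hat s_{k,\mathrm{cp}}\|\ge\kappa_s\min\{\|s\|\mid s\in\operatorname{argmin}_{s'} m_{\mathrm{cp}}(s';x_k,\nu_k^{-1})\}$. (A6) For all $k$: $|f(x_k)-\hat f(x_k)|\le\kappa_f\|s_k\|^2$, $|f(x_k+s_k)-\hat f(x_k+s_k)|\le\kappa_f\|s_k\|^2$, $\|\nabla f(x_k)-\hat\nabla f(x_k)\|\le\kappa_\nabla\|s_k\|$. *)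

theory Defs
  imports "HOL-Analysis.Analysis" "HOL-Library.Extended_Real"
begin

text \<open>Extended-real-valued functions on a Euclidean space model functions into
  the reals extended by plus infinity (properness forbids minus infinity).\<close>

definition proper_fun :: "('a \<Rightarrow> ereal) \<Rightarrow> bool" where
  "proper_fun F \<longleftrightarrow> (\<forall>x. F x \<noteq> -\<infinity>) \<and> (\<exists>x. F x \<noteq> \<infinity>)"

definition lsc_fun :: "('a::topological_space \<Rightarrow> ereal) \<Rightarrow> bool" where
  "lsc_fun F \<longleftrightarrow> (\<forall>x X. X \<longlonglongrightarrow> x \<longrightarrow> F x \<le> liminf (\<lambda>j. F (X j)))"

text \<open>Frechet (regular) subdifferential: v is a Frechet subgradient of F at x iff
  F x is finite and liminf_{y -> x, y ~= x} (F y - F x - v.(y-x)) / norm (y-x) >= 0,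
  written out in epsilon-delta form.\<close>
definition frechet_subdiff :: "('a::real_inner \<Rightarrow> ereal) \<Rightarrow> 'a \<Rightarrow> 'a set" where
  "frechet_subdiff F x = {v. \<bar>F x\<bar> \<noteq> \<infinity> \<and>
     (\<forall>e>0. \<exists>d>0. \<forall>y. norm (y - x) < d \<longrightarrow>
        ereal (real_of_ereal (F x) + inner v (y - x) - e * norm (y - x)) \<le> F y)}"

definition limiting_subdiff :: "('a::real_inner \<Rightarrow> ereal) \<Rightarrow> 'a \<Rightarrow> 'a set" where
  "limiting_subdiff F x = {v. \<bar>F x\<bar> \<noteq> \<infinity> \<and>
     (\<exists>X V. X \<longlonglongrightarrow> x \<and> (\<lambda>j. F (X j)) \<longlonglongrightarrow> F x \<and> V \<longlonglongrightarrow> v \<and>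
            (\<forall>j. V j \<in> frechet_subdiff F (X j)))}"

definition argmin_set :: "('a \<Rightarrow> ereal) \<Rightarrow> 'a set" where
  "argmin_set F = {s. \<forall>t. F s \<le> F t}"

definition spec_norm :: "real^'n^'n \<Rightarrow> real" where
  "spec_norm B = onorm (\<lambda>v. B *v v)"

text \<open>Models of the paper (psi x s stands for psi(s;x)).\<close>
definition m_cp :: "real \<Rightarrow> real^'n \<Rightarrow> (real^'n \<Rightarrow> ereal) \<Rightarrow> real \<Rightarrow> real^'n \<Rightarrow> ereal" where
  "m_cp fh gh ps nuinv s = ereal (fh + inner gh s + nuinv / 2 * (norm s)\<^sup>2) + ps s"

definition phi_q :: "real \<Rightarrow> real^'n \<Rightarrow> real^'n^'n \<Rightarrow> real^'n \<Rightarrow> real" where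
  "phi_q fh gh B s = fh + inner gh s + inner s (B *v s) / 2"

definition m_q :: "real \<Rightarrow> real^'n \<Rightarrow> real^'n^'n \<Rightarrow> (real^'n \<Rightarrow> ereal) \<Rightarrow> real \<Rightarrow> real^'n \<Rightarrow> ereal" where
  "m_q fh gh B ps sg s = ereal (phi_q fh gh B s + sg / 2 * (norm s)\<^sup>2) + ps s"

end

theory Submission
  imports Defs
begin

lemma argmin_closed:
  fixes g :: "'a::metric_space \<Rightarrow> real" and P :: "'a \<Rightarrow> ereal"
  assumes gc: "continuous_on UNIV g" and lsc: "lsc_fun P" and pr: "proper_fun P"
  shows "closed (argmin_set (\<lambda>s. ereal (g s) + P s))"
  unfolding closed_sequential_limits
proof (intro allI impI, elim conjE)
  fix X l assume XS: "\<forall>n. X n \<in> argmin_set (\<lambda>s. ereal (g s) + P s)" and Xl: "X \<longlonglongrightarrow> l"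
  let ?F = "\<lambda>s. ereal (g s) + P s"
  obtain z where z: "P z \<noteq> \<infinity>" using pr unfolding proper_fun_def by auto
  have m: "\<And>n t. ?F (X n) \<le> ?F t" using XS unfolding argmin_set_def by blast
  have min0: "\<And>t. ?F (X 0) \<le> ?F t" by (rule m)
  have eq: "\<And>j. ?F (X j) = ?F (X 0)" by (rule order.antisym[OF m m])
  have "?F (X 0) \<le> ?F z" by (rule min0)
  moreover have "?F z \<noteq> \<infinity>" using z by simp
  ultimately have c1: "?F (X 0) \<noteq> \<infinity>" by auto
  have c2: "?F (X 0) \<noteq> -\<infinity>" using pr unfolding proper_fun_def by simp
  then obtain r where r: "?F (X 0) = ereal r" using c1 by (cases "?F (X 0)") auto
  have Pj: "P (X j) = ereal (r - g (X j))" for j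
  proof -
    have "ereal (g (X j)) + P (X j) = ereal r" using eq[of j] r by simp
    then show ?thesis by (cases "P (X j)") auto
  qed
  have gl: "(\<lambda>j. g (X j)) \<longlonglongrightarrow> g l"
  proof -
    have "isCont g l" using gc by (simp add: continuous_on_eq_continuous_at)
    then show ?thesis using Xl by (rule isCont_tendsto_compose)
  qed
  have "(\<lambda>j. P (X j)) \<longlonglongrightarrow> ereal (r - g l)"
    unfolding Pj by (intro tendsto_intros gl)
  then have "liminf (\<lambda>j. P (X j)) = ereal (r - g l)"
    by (intro lim_imp_Liminf) auto
  moreover have "P l \<le> liminf (\<lambda>j. P (X j))" using lsc Xl unfolding lsc_fun_def by auto
  ultimately have "P l \<le> ereal (r - g l)" by simp
  then have "?F l \<le> ereal r"
    by (cases "P l") auto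
  then have "\<And>t. ?F l \<le> ?F t" using min0 r by (metis order.trans)
  then show "l \<in> argmin_set ?F" unfolding argmin_set_def by blast
qed

lemma frechet_at_min:
  fixes P :: "real^'n \<Rightarrow> ereal" and a :: real and b s :: "real^'n"
  assumes sm: "s \<in> argmin_set (m_cp a b P c)" and c: "c > 0" and fin: "\<bar>P s\<bar> \<noteq> \<infinity>"
  shows "- (b + c *\<^sub>R s) \<in> frechet_subdiff P s"
  unfolding frechet_subdiff_def
proof (intro CollectI conjI fin allI impI)
  fix e :: real assume e: "e > 0"
  obtain ps where ps: "P s = ereal ps" using fin by (cases "P s") auto
  show "\<exists>d>0. \<forall>y. norm (y - s) < d \<longrightarrow>
        ereal (real_of_ereal (P s) + inner (- (b + c *\<^sub>R s)) (y - s) - e * norm (y - s)) \<le> P y"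
  proof (intro exI[of _ "2 * e / c"] conjI allI impI)
    show "0 < 2 * e / c" using e c by simp
    fix y assume y: "norm (y - s) < 2 * e / c"
    show "ereal (real_of_ereal (P s) + inner (- (b + c *\<^sub>R s)) (y - s) - e * norm (y - s)) \<le> P y"
    proof (cases "P y")
      case (real py)
      define d where "d = y - s"
      have yd: "y = s + d" unfolding d_def by simp
      have mn: "m_cp a b P c s \<le> m_cp a b P c y" using sm unfolding argmin_set_def by auto
      then have ineq: "a + inner b s + c / 2 * (norm s)\<^sup>2 + ps \<le> a + inner b y + c / 2 * (norm y)\<^sup>2 + py"
        unfolding m_cp_def using ps real by simp
      have ny: "(norm y)\<^sup>2 = (norm s)\<^sup>2 + 2 * inner s d + (norm d)\<^sup>2"
        unfolding yd by (simp add: power2_norm_eq_inner inner_add_left inner_add_right inner_commute)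
      have by_: "inner b y = inner b s + inner b d" unfolding yd by (simp add: inner_add_right)
      have ineq2: "ps - inner b d - c * inner s d - c / 2 * (norm d)\<^sup>2 \<le> py"
        using ineq ny by_ by (simp add: algebra_simps)
      have nd: "norm d < 2 * e / c" using y d_def by simp
      have "c / 2 * (norm d)\<^sup>2 \<le> e * norm d"
      proof -
        have "c * norm d \<le> 2 * e" using nd c by (simp add: field_simps)
        then have "c * norm d * norm d \<le> 2 * e * norm d" by (simp add: mult_right_mono)
        then show ?thesis by (simp add: power2_eq_square algebra_simps)
      qed
      moreover have "inner (- (b + c *\<^sub>R s)) d = - inner b d - c * inner s d"
        by (simp add: inner_add_left inner_diff_left inner_minus_left)
      ultimately have "ps + inner (- (b + c *\<^sub>R s)) d - e * norm d \<le> py"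
        using ineq2 by linarith
      then show ?thesis using ps real d_def by simp
    next
      case PInf then show ?thesis by simp
    next
      case MInf
      have "m_cp a b P c s \<le> m_cp a b P c y" using sm unfolding argmin_set_def by auto
      then show ?thesis using MInf ps unfolding m_cp_def by simp
    qed
  qed
qed

lemma frechet_in_limiting:
  assumes "v \<in> frechet_subdiff F x"
  shows "v \<in> limiting_subdiff F x"
proof -
  have fin: "\<bar>F x\<bar> \<noteq> \<infinity>" using assms unfolding frechet_subdiff_def by auto
  show ?thesis unfolding limiting_subdiff_def
  proof (intro CollectI conjI fin)
    show "\<exists>X V. X \<longlonglongrightarrow> x \<and> (\<lambda>j. F (X j)) \<longlonglongrightarrow> F x \<and> V \<longlonglongrightarrow> v \<and>
            (\<forall>j. V j \<in> frechet_subdiff F (X j))"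
      by (rule exI[of _ "\<lambda>j. x"], rule exI[of _ "\<lambda>j. v"]) (simp add: assms)
  qed
qed

theorem theorem3p8:
  fixes f :: "real^'n \<Rightarrow> real" and fgrad :: "real^'n \<Rightarrow> real^'n"
    and h :: "real^'n \<Rightarrow> ereal"
    and psi :: "real^'n \<Rightarrow> real^'n \<Rightarrow> ereal"
    and Bf :: "real^'n \<Rightarrow> real^'n^'n"
    and lam kf kg ks gam1 gam2 gam3 eta1 eta2 th1 th2 smin :: real
    and fh :: "nat \<Rightarrow> real^'n \<Rightarrow> real" and gh :: "nat \<Rightarrow> real^'n"
    and x shat s :: "nat \<Rightarrow> real^'n"
    and sg nu :: "nat \<Rightarrow> real"
    and eps :: real and k :: nat
  assumes f_C1: "\<forall>y. (f has_derivative (\<lambda>v. inner (fgrad y) v)) (at y)"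
    and fgrad_cont: "continuous_on UNIV fgrad"
    and h_proper: "proper_fun h" and h_lsc: "lsc_fun h"
    and psi_proper: "\<forall>y. proper_fun (psi y)" and psi_lsc: "\<forall>y. lsc_fun (psi y)"
    and psi_0: "\<forall>y. psi y 0 = h y"
    and psi_subdiff: "\<forall>y. limiting_subdiff (psi y) 0 \<subseteq> limiting_subdiff h y"
    and prox_bdd: "lam > 0 \<and> (\<forall>y. \<forall>lam'. 0 < lam' \<and> lam' < lam \<longrightarrow>
                     (\<exists>c::real. \<forall>w. ereal c \<le> psi y w + ereal ((norm w)\<^sup>2 / (2 * lam'))))"
    and B_sym: "\<forall>y. transpose (Bf y) = Bf y"
    and params: "kf > 0" "kg > 0" "0 < gam3" "gam3 \<le> 1" "1 < gam1" "gam1 \<le> gam2"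
       "0 < eta1" "eta1 \<le> eta2" "eta2 < 1" "0 < th1" "th1 < 1" "1 < th2"
       "smin > 4 * kf * th1 * th2\<^sup>2 / (eta1 * (1 - th1))"
    and sigma0: "sg 0 \<ge> smin"
    and nu_def: "\<forall>j. nu j = th1 / (spec_norm (Bf (x j)) + sg j)"
    and cauchy_dec: "\<forall>j. m_cp (fh j (x j)) (gh j) (psi (x j)) (1 / nu j) (shat j)
                        \<le> m_cp (fh j (x j)) (gh j) (psi (x j)) (1 / nu j) 0"
    and step: "\<forall>j. \<exists>s'. m_q (fh j (x j)) (gh j) (Bf (x j)) (psi (x j)) (sg j) s'
                          \<le> m_q (fh j (x j)) (gh j) (Bf (x j)) (psi (x j)) (sg j) (shat j)
                       \<and> s j = (if norm s' > th2 * norm (shat j) then shat j else s')"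
    and iterate: "\<forall>j. let rho =
             ((ereal (fh j (x j)) + h (x j)) - (ereal (fh j (x j + s j)) + h (x j + s j))) /
             ((ereal (phi_q (fh j (x j)) (gh j) (Bf (x j)) 0) + psi (x j) 0)
               - (ereal (phi_q (fh j (x j)) (gh j) (Bf (x j)) (s j)) + psi (x j) (s j)))
           in x (Suc j) = (if rho \<ge> ereal eta1 then x j + s j else x j)
            \<and> (\<exists>sig'. (rho \<ge> ereal eta2 \<longrightarrow> gam3 * sg j \<le> sig' \<and> sig' \<le> sg j)
                    \<and> (ereal eta1 \<le> rho \<and> rho < ereal eta2 \<longrightarrow> sg j \<le> sig' \<and> sig' \<le> gam1 * sg j)
                    \<and> (rho < ereal eta1 \<longrightarrow> gam1 * sg j \<le> sig' \<and> sig' \<le> gam2 * sg j)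
                    \<and> sg (Suc j) = max sig' smin)"
    and A5: "0 < ks" "ks \<le> 1"
       "\<forall>j. argmin_set (m_cp (fh j (x j)) (gh j) (psi (x j)) (1 / nu j)) \<noteq> {}
          \<and> norm (shat j) \<ge> ks * Inf (norm ` argmin_set (m_cp (fh j (x j)) (gh j) (psi (x j)) (1 / nu j)))"
    and A6: "\<forall>j. \<bar>f (x j) - fh j (x j)\<bar> \<le> kf * (norm (s j))\<^sup>2
              \<and> \<bar>f (x j + s j) - fh j (x j + s j)\<bar> \<le> kf * (norm (s j))\<^sup>2
              \<and> norm (fgrad (x j) - gh j) \<le> kg * norm (s j)"
    and eps_pos: "eps > 0"
    and small: "(1 / nu k) * norm (shat k) < eps"
  shows "\<exists>scp. scp \<in> argmin_set (m_cp (fh k (x k)) (gh k) (psi (x k)) (1 / nu k))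
           \<and> norm (shat k) \<ge> ks * norm scp
           \<and> norm scp < (1 / ks) * (th1 / smin) * eps
           \<and> (\<exists>u. u \<in> (\<lambda>v. fgrad (x k) + v) ` limiting_subdiff (psi (x k)) scp
                  \<and> norm u < (kg * th2 * (th1 / smin) + 1 / ks) * eps)"
proof -
  have sgk: "sg j \<ge> smin" for j
  proof (induction j)
    case 0 then show ?case using sigma0 by simp
  next
    case (Suc j)
    have H: "\<exists>sig'. sg (Suc j) = max sig' smin"
      using conjunct2[OF iterate[rule_format, of j, unfolded Let_def]]
      by (elim exE conjE) (rule exI)
    then show ?case by auto
  qed
  have smin_pos: "smin > 0"
  proof -
    have "4 * kf * th1 * th2\<^sup>2 / (eta1 * (1 - th1)) > 0"
      using params by (intro divide_pos_pos mult_pos_pos) auto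
    then show ?thesis using params(13) by linarith
  qed
  have sn: "spec_norm (Bf (x k)) \<ge> 0"
    unfolding spec_norm_def by (intro onorm_pos_le matrix_vector_mul_bounded_linear)
  have den: "spec_norm (Bf (x k)) + sg k \<ge> smin" using sn sgk[of k] by linarith
  have nuk: "nu k = th1 / (spec_norm (Bf (x k)) + sg k)" using nu_def by blast
  have denp: "spec_norm (Bf (x k)) + sg k > 0" using den smin_pos by linarith
  have nupos: "nu k > 0" unfolding nuk using params(10) denp by (rule divide_pos_pos)
  have nule: "nu k \<le> th1 / smin"
    unfolding nuk using params(10) den smin_pos by (intro divide_left_mono) auto
  define F where "F = m_cp (fh k (x k)) (gh k) (psi (x k)) (1 / nu k)"
  define g where "g = (\<lambda>s::real^'n. fh k (x k) + inner (gh k) s + (1 / nu k) / 2 * (norm s)\<^sup>2)"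
  have Fg: "F = (\<lambda>s. ereal (g s) + psi (x k) s)"
    unfolding F_def g_def m_cp_def by simp
  have gc: "continuous_on UNIV g" unfolding g_def by (intro continuous_intros)
  have cl: "closed (argmin_set F)" unfolding Fg
    using argmin_closed[OF gc] psi_lsc psi_proper by blast
  have ne: "argmin_set F \<noteq> {}" and shatI: "norm (shat k) \<ge> ks * Inf (norm ` argmin_set F)"
    using A5(3) unfolding F_def by auto
  obtain scp where scpS: "scp \<in> argmin_set F" and scpmin: "\<And>y. y \<in> argmin_set F \<Longrightarrow> dist 0 scp \<le> dist 0 y"
    using distance_attains_inf[OF cl ne, of 0] by blast
  have "Inf (norm ` argmin_set F) = norm scp"
    using scpS scpmin by (intro cInf_eq_minimum) auto
  then have shs: "norm (shat k) \<ge> ks * norm scp" using shatI by simp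
  have shat_lt: "norm (shat k) < nu k * eps" using small nupos by (simp add: field_simps)
  have scp_lt: "norm scp < (1 / ks) * (th1 / smin) * eps"
  proof -
    have "ks * norm scp < (th1 / smin) * eps"
    proof -
      have "nu k * eps \<le> (th1 / smin) * eps" by (rule mult_right_mono[OF nule]) (use eps_pos in simp)
      then show ?thesis using shs shat_lt by linarith
    qed
    then have "norm scp < ((th1 / smin) * eps) / ks" using A5(1)
      by (subst pos_less_divide_eq) (auto simp: mult.commute)
    then show ?thesis by (simp add: ac_simps)
  qed
  obtain z where z: "psi (x k) z \<noteq> \<infinity>" using psi_proper unfolding proper_fun_def by auto
  have "F scp \<le> F z" using scpS unfolding argmin_set_def by auto
  then have "psi (x k) scp \<noteq> \<infinity>" using z unfolding Fg by auto
  moreover have "psi (x k) scp \<noteq> -\<infinity>" using psi_proper unfolding proper_fun_def by auto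
  ultimately have fin: "\<bar>psi (x k) scp\<bar> \<noteq> \<infinity>" by auto
  define v where "v = - (gh k + (1 / nu k) *\<^sub>R scp)"
  have vF: "v \<in> frechet_subdiff (psi (x k)) scp"
    unfolding v_def by (rule frechet_at_min[OF scpS[unfolded F_def] _ fin]) (simp add: nupos)
  have vL: "v \<in> limiting_subdiff (psi (x k)) scp" by (rule frechet_in_limiting[OF vF])
  have sk: "norm (s k) \<le> th2 * norm (shat k)"
  proof -
    obtain s' where "s k = (if norm s' > th2 * norm (shat k) then shat k else s')"
      using step[rule_format, of k] by blast
    moreover have "norm (shat k) \<le> th2 * norm (shat k)"
      using params(12) mult_right_mono[of 1 th2 "norm (shat k)"] by simp
    ultimately show ?thesis
      by (cases "norm s' > th2 * norm (shat k)") auto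
  qed
  have g1: "norm (fgrad (x k) - gh k) < kg * th2 * (th1 / smin) * eps"
  proof -
    have "norm (fgrad (x k) - gh k) \<le> kg * norm (s k)" using A6[rule_format, of k] by blast
    also have "\<dots> \<le> kg * (th2 * norm (shat k))" using sk params(2) by simp
    also have "\<dots> < kg * (th2 * (nu k * eps))" using shat_lt params(2,12) by simp
    also have "\<dots> \<le> kg * (th2 * ((th1 / smin) * eps))"
      using nule params(2,12) eps_pos by (intro mult_left_mono mult_right_mono) auto
    finally show ?thesis by (simp add: algebra_simps)
  qed
  have g2: "norm ((1 / nu k) *\<^sub>R scp) < (1 / ks) * eps"
  proof -
    have "norm ((1 / nu k) *\<^sub>R scp) = norm scp / nu k" using nupos by simp
    also have "\<dots> \<le> norm (shat k) / ks / nu k"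
      using shs A5(1) nupos by (intro divide_right_mono) (auto simp: field_simps)
    also have "\<dots> < (1 / ks) * eps" using small A5(1) nupos by (simp add: field_simps)
    finally show ?thesis .
  qed
  have "fgrad (x k) + v = (fgrad (x k) - gh k) - (1 / nu k) *\<^sub>R scp" unfolding v_def by simp
  then have "norm (fgrad (x k) + v) \<le> norm (fgrad (x k) - gh k) + norm ((1 / nu k) *\<^sub>R scp)"
    using norm_triangle_ineq4 by metis
  moreover have "(kg * th2 * (th1 / smin) + 1 / ks) * eps = kg * th2 * (th1 / smin) * eps + (1 / ks) * eps"
    by (simp only: distrib_right)
  ultimately have un: "norm (fgrad (x k) + v) < (kg * th2 * (th1 / smin) + 1 / ks) * eps"
    using g1 g2 by linarith
  show ?thesis
    apply (rule exI[of _ scp])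
    apply (intro conjI)
       apply (rule scpS[unfolded F_def])
      apply (rule shs)
     apply (rule scp_lt)
    apply (rule exI[of _ "fgrad (x k) + v"])
    apply (intro conjI)
     apply (rule imageI[OF vL])
    apply (rule un)
    done
qed

end
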